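(* Let $B$ be a composition of $n$ finite Blaschke products each of degree $2$. Then $B$ has at most $n$ distinct critical values.
   Context: A finite Blaschke product of degree $d$ is $B(z)=\gamma\prod_{j=1}^d \frac{z-a_j}{1-\overline{a_j}z}$ with $a_j\in\mathbb{D}$ and $|\gamma|=1$. The set of critical values of $B$ is $\{w\in\mathbb{D}: w=B(z)\text{ for some } z\in\mathbb{D} \text{ with } B'(z)=0\}$. *)

theory Defs
  imports "HOL-Analysis.Analysis"
begin

definition finite_blaschke :: "nat \<Rightarrow> (complex \<Rightarrow> complex) \<Rightarrow> bool" where
  "finite_blaschke d B \<longleftrightarrow>
     (\<exists>(\<gamma>::complex) (a::nat \<Rightarrow> complex).
        cmod \<gamma> = 1 \<and> (\<forall>j<d. a j \<in> ball 0 1) \<and>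
        (\<forall>z\<in>ball 0 1. B z = \<gamma> * (\<Prod>j<d. (z - a j) / (1 - cnj (a j) * z))))"

definition critical_values :: "(complex \<Rightarrow> complex) \<Rightarrow> complex set" where
  "critical_values B = {w \<in> ball 0 1. \<exists>z\<in>ball 0 1. deriv B z = 0 \<and> w = B z}"

end

theory Submission
  imports Defs "HOL-Complex_Analysis.Riemann_Mapping"
begin

lemma moeb_lt1:
  fixes a z :: complex
  assumes "norm a < 1" "norm z < 1"
  shows "norm ((z - a) / (1 - cnj a * z)) < 1" "1 - cnj a * z \<noteq> 0"
proof -
  show "norm ((z - a) / (1 - cnj a * z)) < 1"
    using Moebius_function_norm_lt_1[OF assms, of 0] by (simp add: Moebius_function_simple)
  have "norm a * norm z < 1 * 1"
    by (rule mult_strict_mono') (use assms in auto)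
  then have "norm (cnj a * z) < 1" by (simp add: norm_mult)
  then show "1 - cnj a * z \<noteq> 0" by auto
qed

lemma moeb_der:
  fixes a c :: complex
  assumes "1 - cnj a * c \<noteq> 0"
  shows "((\<lambda>z. (z - a) / (1 - cnj a * z)) has_field_derivative (1 - a * cnj a) / (1 - cnj a * c)^2) (at c)"
proof -
  have "((\<lambda>z. (z - a) / (1 - cnj a * z)) has_field_derivative
     ((1 - 0) * (1 - cnj a * c) - (c - a) * (0 - cnj a * 1)) / ((1 - cnj a * c) * (1 - cnj a * c))) (at c)"
    by (intro derivative_intros assms DERIV_cmult[OF DERIV_ident])
  moreover have "((1 - 0) * (1 - cnj a * c) - (c - a) * (0 - cnj a * 1)) / ((1 - cnj a * c) * (1 - cnj a * c))
     = (1 - a * cnj a) / (1 - cnj a * c)^2"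
    by (simp add: power2_eq_square algebra_simps)
  ultimately show ?thesis by simp
qed
lemma alg:
  fixes a0 a1 c \<gamma> :: complex
  assumes n0: "1 - cnj a0 * c \<noteq> 0" and n1: "1 - cnj a1 * c \<noteq> 0"
  shows "\<gamma> * ((c - a0) / (1 - cnj a0 * c) * ((1 - a1 * cnj a1) / (1 - cnj a1 * c)^2) +
           (1 - a0 * cnj a0) / (1 - cnj a0 * c)^2 * ((c - a1) / (1 - cnj a1 * c)))
   = \<gamma> * ((a0*a1 * cnj (a0+a1) - (a0+a1)) + 2 * (1 - a0*a1 * cnj (a0*a1)) * c + cnj (a0*a1 * cnj (a0+a1) - (a0+a1)) * c^2)
      / ((1 - cnj a0 * c) * (1 - cnj a1 * c))^2"
proof -
  define u where "u = 1 - cnj a0 * c"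
  define v where "v = 1 - cnj a1 * c"
  have u: "u \<noteq> 0" and v: "v \<noteq> 0" using n0 n1 by (auto simp: u_def v_def)
  have "(c - a0) / u * ((1 - a1 * cnj a1) / v^2) + (1 - a0 * cnj a0) / u^2 * ((c - a1) / v)
      = ((1 - a0 * cnj a0) * (c - a1) * v + (1 - a1 * cnj a1) * (c - a0) * u) / (u * v)^2"
    using u v by (simp add: field_simps power2_eq_square)
  also have "(1 - a0 * cnj a0) * (c - a1) * v + (1 - a1 * cnj a1) * (c - a0) * u
     = (a0*a1 * cnj (a0+a1) - (a0+a1)) + 2 * (1 - a0*a1 * cnj (a0*a1)) * c + cnj (a0*a1 * cnj (a0+a1) - (a0+a1)) * c^2"
    unfolding u_def v_def by (simp add: algebra_simps power2_eq_square)
  finally show ?thesis unfolding u_def v_def by simp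
qed

lemma blaschke2_props:
  assumes "finite_blaschke 2 f"
  shows "\<forall>z\<in>ball 0 1. f z \<in> ball 0 1"
    and "\<forall>z\<in>ball 0 1. f field_differentiable at z"
    and "\<forall>c1\<in>ball 0 1. \<forall>c2\<in>ball 0 1. deriv f c1 = 0 \<longrightarrow> deriv f c2 = 0 \<longrightarrow> c1 = c2"
proof -
  obtain \<gamma> and a :: "nat \<Rightarrow> complex" where g1: "cmod \<gamma> = 1" and aa: "\<forall>j<2. a j \<in> ball (0::complex) 1"
    and fe: "\<forall>z\<in>ball 0 1. f z = \<gamma> * (\<Prod>j<2. (z - a j) / (1 - cnj (a j) * z))"
    using assms unfolding finite_blaschke_def by blast
  define a0 where "a0 = a 0"
  define a1 where "a1 = a 1"
  have a0: "norm a0 < 1" and a1: "norm a1 < 1" using aa by (auto simp: a0_def a1_def)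
  have fe2: "f z = \<gamma> * ((z - a0) / (1 - cnj a0 * z) * ((z - a1) / (1 - cnj a1 * z)))"
    if "z \<in> ball 0 1" for z
    using fe that by (simp add: numeral_2_eq_2 a0_def a1_def)
  show "\<forall>z\<in>ball 0 1. f z \<in> ball 0 1"
  proof
    fix z :: complex assume z: "z \<in> ball 0 1"
    then have zn: "norm z < 1" by simp
    have "norm (f z) = norm ((z - a0) / (1 - cnj a0 * z)) * norm ((z - a1) / (1 - cnj a1 * z))"
      using fe2[OF z] g1 by (simp only: norm_mult mult_1_left)
    also have "\<dots> < 1"
      using mult_strict_mono'[OF moeb_lt1(1)[OF a0 zn] moeb_lt1(1)[OF a1 zn]] by simp
    finally show "f z \<in> ball 0 1" by simp
  qed
  define Q where "Q z = (1 - cnj a0 * z) * (1 - cnj a1 * z)" for z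
  define s where "s = a0 + a1"
  define p where "p = a0 * a1"
  define \<alpha> where "\<alpha> = p * cnj s - s"
  define \<beta> where "\<beta> = 2 * (1 - p * cnj p)"
  define N where "N z = \<alpha> + \<beta> * z + cnj \<alpha> * z^2" for z
  have Qnz: "Q z \<noteq> 0" if "norm z < 1" for z
    using moeb_lt1(2)[OF a0 that] moeb_lt1(2)[OF a1 that] by (simp add: Q_def)
  have der: "(f has_field_derivative \<gamma> * N c / (Q c)^2) (at c)" if c: "c \<in> ball 0 1" for c
  proof -
    have cn: "norm c < 1" using c by simp
    have n0: "1 - cnj a0 * c \<noteq> 0" "1 - cnj a1 * c \<noteq> 0"
      using moeb_lt1(2)[OF a0 cn] moeb_lt1(2)[OF a1 cn] by auto
    have "((\<lambda>z. \<gamma> * ((z - a0) / (1 - cnj a0 * z) * ((z - a1) / (1 - cnj a1 * z))))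
        has_field_derivative \<gamma> * ((c - a0) / (1 - cnj a0 * c) * ((1 - a1 * cnj a1) / (1 - cnj a1 * c)^2) +
           (1 - a0 * cnj a0) / (1 - cnj a0 * c)^2 * ((c - a1) / (1 - cnj a1 * c)))) (at c)"
      by (intro DERIV_cmult DERIV_mult' moeb_der n0)
    also have "\<gamma> * ((c - a0) / (1 - cnj a0 * c) * ((1 - a1 * cnj a1) / (1 - cnj a1 * c)^2) +
           (1 - a0 * cnj a0) / (1 - cnj a0 * c)^2 * ((c - a1) / (1 - cnj a1 * c))) = \<gamma> * N c / (Q c)^2"
      unfolding N_def Q_def \<alpha>_def \<beta>_def s_def p_def by (rule alg[OF n0])
    finally have "((\<lambda>z. \<gamma> * ((z - a0) / (1 - cnj a0 * z) * ((z - a1) / (1 - cnj a1 * z))))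
        has_field_derivative \<gamma> * N c / (Q c)^2) (at c)" .
    then show ?thesis
      apply (rule has_field_derivative_transform_within_open[where S="ball 0 1"])
      using c fe2 by auto
  qed
  show "\<forall>z\<in>ball 0 1. f field_differentiable at z"
    using der field_differentiable_def by blast
  show "\<forall>c1\<in>ball 0 1. \<forall>c2\<in>ball 0 1. deriv f c1 = 0 \<longrightarrow> deriv f c2 = 0 \<longrightarrow> c1 = c2"
  proof (intro ballI impI, rule ccontr)
    fix c1 c2 :: complex
    assume c1: "c1 \<in> ball 0 1" and c2: "c2 \<in> ball 0 1" and d1: "deriv f c1 = 0"
      and d2: "deriv f c2 = 0" and ne: "c1 \<noteq> c2"
    have g0: "\<gamma> \<noteq> 0" using g1 by auto
    have N1: "N c1 = 0" using DERIV_imp_deriv[OF der[OF c1]] d1 g0 Qnz[of c1] c1 by simp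
    have N2: "N c2 = 0" using DERIV_imp_deriv[OF der[OF c2]] d2 g0 Qnz[of c2] c2 by simp
    have "N c1 - N c2 = (c1 - c2) * (\<beta> + cnj \<alpha> * (c1 + c2))"
      unfolding N_def by (simp add: algebra_simps power2_eq_square)
    then have e1: "\<beta> + cnj \<alpha> * (c1 + c2) = 0" using N1 N2 ne by simp
    have "\<beta> = (\<beta> + cnj \<alpha> * (c1 + c2)) - cnj \<alpha> * (c1 + c2)" by simp
    also have "\<dots> = - cnj \<alpha> * (c1 + c2)" using e1 by simp
    finally have "\<beta> = - cnj \<alpha> * (c1 + c2)" .
    then have be: "\<beta> = - cnj \<alpha> * (c1 + c2)" .
    have "\<alpha> + \<beta>*c1 + cnj \<alpha> * c1^2 = 0" using N1 by (simp add: N_def)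
    then have "\<alpha> + (- cnj \<alpha>*(c1+c2))*c1 + cnj \<alpha>*c1^2 = 0" by (simp only: be)
    moreover have "\<alpha> + (- cnj \<alpha>*(c1+c2))*c1 + cnj \<alpha>*c1^2 = \<alpha> - cnj \<alpha>*c1*c2"
      by (simp add: algebra_simps power2_eq_square)
    ultimately have e2: "\<alpha> = cnj \<alpha> * c1 * c2" by simp
    have pn: "norm p < 1" using mult_strict_mono'[OF a0 a1] unfolding p_def by (simp add: norm_mult)
    show False
    proof (cases "\<alpha> = 0")
      case True
      then have "\<beta> = 0" using e1 by simp
      then have "p * cnj p = 1" unfolding \<beta>_def by simp
      then have "complex_of_real (norm p ^ 2) = 1" by (simp only: complex_norm_square)
      then have "norm p ^ 2 = 1" by (simp only: of_real_eq_1_iff)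
      moreover have "norm p * norm p < 1 * 1" using mult_strict_mono'[OF pn pn] by simp
      ultimately show False by (simp add: power2_eq_square)
    next
      case False
      have "norm \<alpha> = norm (cnj \<alpha> * c1 * c2)" by (rule arg_cong[OF e2])
      also have "\<dots> = norm \<alpha> * (norm c1 * norm c2)" by (simp add: norm_mult)
      finally have "norm \<alpha> = norm \<alpha> * (norm c1 * norm c2)" .
      moreover have "norm c1 * norm c2 < 1 * 1" using c1 c2
        by (intro mult_strict_mono') auto
      moreover have "norm \<alpha> > 0" using False by simp
      ultimately show False
        by (metis less_irrefl mult.right_neutral mult_strict_left_mono)
    qed
  qed
qed


lemma main_ind:
  assumes "\<forall>f\<in>set fs. finite_blaschke 2 f"
  shows "(\<forall>z\<in>ball 0 1. foldr (\<circ>) fs id z \<in> ball 0 1)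
    \<and> (\<forall>z\<in>ball 0 1. foldr (\<circ>) fs id field_differentiable at z)
    \<and> finite (critical_values (foldr (\<circ>) fs id))
    \<and> card (critical_values (foldr (\<circ>) fs id)) \<le> length fs"
  using assms
proof (induction fs)
  case Nil
  have "critical_values (\<lambda>a. a) = {}" unfolding critical_values_def by auto
  then show ?case by (auto simp: field_differentiable_ident id_def)
next
  case (Cons f fs)
  let ?G = "foldr (\<circ>) fs id"
  have pr: "\<forall>f\<in>set fs. finite_blaschke 2 f" using Cons.prems by simp
  have IH: "\<forall>z\<in>ball 0 1. ?G z \<in> ball 0 1" "\<forall>z\<in>ball 0 1. ?G field_differentiable at z"
    "finite (critical_values ?G)" "card (critical_values ?G) \<le> length fs"
    using Cons.IH[OF pr] by blast+
  have fb: "finite_blaschke 2 f" using Cons.prems by simp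
  note F = blaschke2_props[OF fb]
  define C where "C = {c \<in> ball 0 1. deriv f c = 0}"
  have Csub: "\<exists>c0. C \<subseteq> {c0}" using F(3) unfolding C_def by blast
  then obtain c0 where c0: "C \<subseteq> {c0}" by blast
  have eq: "foldr (\<circ>) (f # fs) id = f \<circ> ?G" by simp
  have sub: "critical_values (f \<circ> ?G) \<subseteq> f ` critical_values ?G \<union> {f c0}"
  proof
    fix w assume "w \<in> critical_values (f \<circ> ?G)"
    then obtain z where z: "z \<in> ball 0 1" "deriv (f \<circ> ?G) z = 0" "w = f (?G z)" and w: "w \<in> ball 0 1"
      unfolding critical_values_def by auto
    have "deriv (f \<circ> ?G) z = deriv f (?G z) * deriv ?G z"
      using IH F z by (intro deriv_chain) auto
    then have "deriv f (?G z) = 0 \<or> deriv ?G z = 0" using z by simp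
    then show "w \<in> f ` critical_values ?G \<union> {f c0}"
    proof
      assume "deriv f (?G z) = 0"
      then have "?G z \<in> C" using IH z unfolding C_def by auto
      then show ?thesis using c0 z by auto
    next
      assume "deriv ?G z = 0"
      then have "?G z \<in> critical_values ?G" using IH z unfolding critical_values_def by auto
      then show ?thesis using z by auto
    qed
  qed
  have fin: "finite (f ` critical_values ?G \<union> {f c0})" using IH by auto
  have "card (f ` critical_values ?G \<union> {f c0}) \<le> card (f ` critical_values ?G) + 1"
    using card_Un_le[of "f ` critical_values ?G" "{f c0}"] by simp
  also have "\<dots> \<le> card (critical_values ?G) + 1" using card_image_le IH by auto
  finally have "card (critical_values (f \<circ> ?G)) \<le> length (f # fs)"
    using card_mono[OF fin sub] IH by simp
  moreover have "finite (critical_values (f \<circ> ?G))" using finite_subset[OF sub fin] .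
  moreover have "\<forall>z\<in>ball 0 1. (f \<circ> ?G) z \<in> ball 0 1" using IH F by auto
  moreover have "\<forall>z\<in>ball 0 1. (f \<circ> ?G) field_differentiable at z"
    using IH F by (auto intro: field_differentiable_compose)
  ultimately show ?case unfolding eq by blast
qed

theorem corollary4p4:
  fixes fs :: "(complex \<Rightarrow> complex) list" and n :: nat
  assumes "length fs = n"
    and "\<forall>f\<in>set fs. finite_blaschke 2 f"
  shows "finite (critical_values (foldr (\<circ>) fs id))
         \<and> card (critical_values (foldr (\<circ>) fs id)) \<le> n"
  using main_ind[OF assms(2)] assms(1) by simp

end
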